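(* Let $(\mathcal X,\rho)$ be a non-empty Polish metric space with Borel $\sigma$-field $\mathfrak B(\mathcal X)$, and let $\mathcal Y\in\mathfrak B(\mathcal X)$ be compact and satisfy $$c_{x,0}\,s^{-\gamma}\le \log \mathcal N_{\mathcal X}(s,\mathcal Y,\rho)\le c_{x,1}\,s^{-\gamma}\qquad\text{for all } s\in(0,s_0),$$ for constants $s_0>0$, $0<c_{x,0}<c_{x,1}$, $\gamma>0$. Fix $C>0$, $\beta\in(0,1]$, and let $\mathcal G=\mathcal G_{\beta,C}$ be the class of Borel measurable $g:\mathcal X\to\mathbb R$ with $\sup_{y\in\mathcal Y}|g(y)|\le C$ and $|g(y)-g(z)|\le C\rho(y,z)^\beta$ for all $y,z\in\mathcal Y$. For each $n$ consider the model $Y_j=g(X_j)+\varepsilon_j$, $j=1,\dots,n$, where $g\in\mathcal G$, $X_1,\dots,X_n$ are i.i.d. with law $P_{X,n}$ on $\mathfrak B(\mathcal X)$, $P_{X,n}(\mathcal Y)=1$, the $\varepsilon_j$ are i.i.d. real random variables with a continuously differentiable density $f_\varepsilon$ satisfying $\int |f_\varepsilon'(x)|^2/f_\varepsilon(x)\,\mathrm dx<\infty$, and $X_1,\varepsilon_1,\dots,X_n,\varepsilon_n$ are all independent. An estimator $\hat g_n$ is a Borel measurable map $(x,\mathcal Z_n)\mapsto \hat g_n(x,\mathcal Z_n)\in\mathbb R$ of $x\in\mathcal X$ and the data $\mathcal Z_n=\{(X_1,Y_1),\dots,(X_n,Y_n)\}$. (a) There exists a sequence of design measures $P_{X,n}$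 on $\mathfrak B(\mathcal X)$ with $P_{X,n}(\mathcal Y)=1$ for all $n$ such that no sequence of estimators $\{\hat g_n\}_n$ satisfies $$\sup_{g\in\mathcal G}\int E|\hat g_n(x)-g(x)|^2\,\mathrm dP_{X,n}(x)=o\big(\{\log n\}^{-2\beta/\gamma}\big).$$ (b) For any sequence of design measures $P_{X,n}$ with $P_{X,n}(\mathcal Y)=1$ for all $n$ and any sequence of estimators $\{\hat g_n\}_n$, $$\liminf_{n\to\infty}\sup_{g\in\mathcal G}\sup_{x\in\mathcal Y}P\big[|\hat g_n(x)-g(x)|^2>c\{\log n\}^{-2\beta/\gamma}\big]>0$$ for some constant $c>0$ depending on $C$ and $\beta$.
   Context: $\mathcal N_{\mathcal X}(\delta,\mathcal Y,\rho)$ denotes the minimal number of open $\rho$-balls in $\mathcal X$ of radius $\delta$ whose union contains $\mathcal Y$. Probabilities and expectations are under the model with regression function $g$. *)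

theory Defs
  imports "HOL-Probability.Probability"
begin

definition covering_number :: "real \<Rightarrow> 'a::metric_space set \<Rightarrow> nat" where
  "covering_number \<delta> Y = Inf {card C | C. finite C \<and> Y \<subseteq> (\<Union>c\<in>C. ball c \<delta>)}"

definition holder_class :: "'a::metric_space set \<Rightarrow> real \<Rightarrow> real \<Rightarrow> ('a \<Rightarrow> real) set" where
  "holder_class Y \<beta> C = {g. g \<in> borel_measurable borel \<and> (\<forall>y\<in>Y. \<bar>g y\<bar> \<le> C)
      \<and> (\<forall>y\<in>Y. \<forall>z\<in>Y. \<bar>g y - g z\<bar> \<le> C * dist y z powr \<beta>)}"

definition obs_law :: "'a::topological_space measure \<Rightarrow> (real \<Rightarrow> real) \<Rightarrow> ('a \<Rightarrow> real)
    \<Rightarrow> ('a \<times> real) measure" where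
  "obs_law PX f g = distr (PX \<Otimes>\<^sub>M density lborel (\<lambda>e. ennreal (f e))) (borel \<Otimes>\<^sub>M borel)
      (\<lambda>(x, e). (x, g x + e))"

definition sample_law :: "nat \<Rightarrow> 'a::topological_space measure \<Rightarrow> (real \<Rightarrow> real) \<Rightarrow> ('a \<Rightarrow> real)
    \<Rightarrow> (nat \<Rightarrow> 'a \<times> real) measure" where
  "sample_law n PX f g = PiM {..<n} (\<lambda>_. obs_law PX f g)"

definition estimator :: "nat \<Rightarrow> ('a::topological_space \<Rightarrow> (nat \<Rightarrow> 'a \<times> real) \<Rightarrow> real) \<Rightarrow> bool" where
  "estimator n gh \<longleftrightarrow> (\<lambda>(x, z). gh x z) \<in>
      borel_measurable (borel \<Otimes>\<^sub>M PiM {..<n} (\<lambda>_. borel \<Otimes>\<^sub>M borel))"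

definition design :: "'a::topological_space set \<Rightarrow> 'a measure \<Rightarrow> bool" where
  "design Y PX \<longleftrightarrow> prob_space PX \<and> sets PX = sets borel \<and> emeasure PX Y = 1"

definition worst_risk :: "nat \<Rightarrow> 'a::topological_space measure \<Rightarrow> (real \<Rightarrow> real) \<Rightarrow> ('a \<Rightarrow> real) set
    \<Rightarrow> ('a \<Rightarrow> (nat \<Rightarrow> 'a \<times> real) \<Rightarrow> real) \<Rightarrow> ennreal" where
  "worst_risk n PX f G gh = (SUP g\<in>G. \<integral>\<^sup>+ x. (\<integral>\<^sup>+ z. ennreal ((gh x z - g x)\<^sup>2) \<partial>sample_law n PX f g) \<partial>PX)"

end

theory Submission
  imports Defs
begin


definition noiseM :: "(real \<Rightarrow> real) \<Rightarrow> real measure" where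
  "noiseM f = density lborel (\<lambda>e. ennreal (f e))"
definition baseN :: "'a::topological_space measure \<Rightarrow> (real \<Rightarrow> real) \<Rightarrow> ('a \<times> real) measure" where
  "baseN PX f = PX \<Otimes>\<^sub>M noiseM f"
definition Tmap :: "('a \<Rightarrow> real) \<Rightarrow> 'a \<times> real \<Rightarrow> 'a \<times> real" where
  "Tmap g = (\<lambda>(x,e). (x, g x + e))"

lemma prob_noise:
  assumes "(\<integral>\<^sup>+ x. ennreal (f x) \<partial>lborel) = 1" "f \<in> borel_measurable borel"
  shows "prob_space (noiseM f)"
  unfolding noiseM_def
  by (rule prob_spaceI) (subst emeasure_density, use assms in auto)

lemma sets_noise[simp]: "sets (noiseM f) = sets borel"
  by (simp add: noiseM_def)

lemma sets_baseN:
  assumes "sets PX = sets borel"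
  shows "sets (baseN PX f) = sets (borel \<Otimes>\<^sub>M borel)"
  unfolding baseN_def by (intro sets_pair_measure_cong) (simp_all add: assms)

lemma prob_baseN:
  assumes "prob_space PX" "(\<integral>\<^sup>+ x. ennreal (f x) \<partial>lborel) = 1" "f \<in> borel_measurable borel"
  shows "prob_space (baseN PX f)"
  unfolding baseN_def using assms prob_noise
  by (intro prob_space_pair) auto

lemma sets_obs[simp]: "sets (obs_law PX f g) = sets (borel \<Otimes>\<^sub>M borel)"
  by (simp add: obs_law_def)

lemma Tmap_meas:
  assumes "sets PX = sets borel" "g \<in> borel_measurable borel"
  shows "Tmap g \<in> baseN PX f \<rightarrow>\<^sub>M borel \<Otimes>\<^sub>M borel"
proof -
  have "Tmap g \<in> borel \<Otimes>\<^sub>M borel \<rightarrow>\<^sub>M borel \<Otimes>\<^sub>M borel"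
    unfolding Tmap_def using assms(2) by measurable
  then show ?thesis by (subst measurable_cong_sets[OF sets_baseN[OF assms(1)] refl])
qed

lemma obs_law_eq:
  assumes "sets PX = sets borel"
  shows "obs_law PX f g = distr (baseN PX f) (borel \<Otimes>\<^sub>M borel) (Tmap g)"
  by (simp add: obs_law_def baseN_def noiseM_def Tmap_def)

lemma sample_law_eq:
  assumes PX: "prob_space PX" "sets PX = sets borel" and fd: "(\<integral>\<^sup>+ x. ennreal (f x) \<partial>lborel) = 1" "f \<in> borel_measurable borel"
    and g: "g \<in> borel_measurable borel"
  shows "sample_law n PX f g = distr (PiM {..<n} (\<lambda>_. baseN PX f)) (PiM {..<n} (\<lambda>_. obs_law PX f g))
            (compose {..<n} (Tmap g))"
proof -
  have pb: "prob_space (baseN PX f)" using prob_baseN PX fd by auto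
  have po: "prob_space (obs_law PX f g)"
    unfolding obs_law_eq[OF PX(2)] using pb by (intro prob_space.prob_space_distr Tmap_meas PX g)
  have m: "Tmap g \<in> baseN PX f \<rightarrow>\<^sub>M obs_law PX f g"
    by (subst measurable_cong_sets[OF refl sets_obs]) (rule Tmap_meas[OF PX(2) g])
  have "distr (PiM {..<n} (\<lambda>_. baseN PX f)) (PiM {..<n} (\<lambda>_. obs_law PX f g)) (compose {..<n} (Tmap g))
      = PiM {..<n} (\<lambda>_. distr (baseN PX f) (obs_law PX f g) (Tmap g))"
    by (rule distr_PiM_finite_prob_space') (use pb po m in auto)
  also have "(\<lambda>_. distr (baseN PX f) (obs_law PX f g) (Tmap g)) = (\<lambda>_. obs_law PX f g)"
    unfolding obs_law_eq[OF PX(2)] by (intro ext distr_cong) auto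
  finally show ?thesis by (simp add: sample_law_def)
qed



lemma sq_gap: fixes x a0 a1 :: real shows "(a1 - a0)\<^sup>2 \<le> 2*(x-a0)\<^sup>2 + 2*(x-a1)\<^sup>2"
proof -
  have "0 \<le> (2*x - a0 - a1)\<^sup>2" by simp
  then show ?thesis by (simp add: power2_eq_square algebra_simps)
qed

lemma coupling_prob:
  fixes G :: "'b \<Rightarrow> real"
  assumes P: "prob_space \<Omega>" and E: "E \<in> sets \<Omega>" "emeasure \<Omega> E \<ge> 1/2"
    and m0: "\<Phi>0 \<in> \<Omega> \<rightarrow>\<^sub>M Z" and m1: "\<Phi>1 \<in> \<Omega> \<rightarrow>\<^sub>M Z"
    and eq: "\<And>\<omega>. \<omega> \<in> E \<Longrightarrow> \<Phi>0 \<omega> = \<Phi>1 \<omega>"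
    and G: "G \<in> borel_measurable Z" and gap: "(a1 - a0)\<^sup>2 > 4 * t"
  shows "emeasure (distr \<Omega> Z \<Phi>0) {z \<in> space (distr \<Omega> Z \<Phi>0). (G z - a0)\<^sup>2 > t}
       + emeasure (distr \<Omega> Z \<Phi>1) {z \<in> space (distr \<Omega> Z \<Phi>1). (G z - a1)\<^sup>2 > t} \<ge> 1/2"
proof -
  have [measurable]: "G \<in> borel_measurable Z" by fact
  define A0 where "A0 = {z \<in> space Z. (G z - a0)\<^sup>2 > t}"
  define A1 where "A1 = {z \<in> space Z. (G z - a1)\<^sup>2 > t}"
  have A0m: "A0 \<in> sets Z"
  proof -
    have "(\<lambda>z. (G z - a0)\<^sup>2) \<in> borel_measurable Z" by measurable
    then have "(\<lambda>z. (G z - a0)\<^sup>2) -` {t<..} \<inter> space Z \<in> sets Z" by (rule measurable_sets) auto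
    moreover have "(\<lambda>z. (G z - a0)\<^sup>2) -` {t<..} \<inter> space Z = A0" unfolding A0_def by auto
    ultimately show ?thesis by simp
  qed
  have A1m: "A1 \<in> sets Z"
  proof -
    have "(\<lambda>z. (G z - a1)\<^sup>2) \<in> borel_measurable Z" by measurable
    then have "(\<lambda>z. (G z - a1)\<^sup>2) -` {t<..} \<inter> space Z \<in> sets Z" by (rule measurable_sets) auto
    moreover have "(\<lambda>z. (G z - a1)\<^sup>2) -` {t<..} \<inter> space Z = A1" unfolding A1_def by auto
    ultimately show ?thesis by simp
  qed
  have cov: "A0 \<union> A1 = space Z"
  proof -
    { fix z assume z: "z \<in> space Z" and n0: "\<not> (G z - a0)\<^sup>2 > t" and n1: "\<not> (G z - a1)\<^sup>2 > t"
      have "(a1 - a0)\<^sup>2 \<le> 2 * (G z - a0)\<^sup>2 + 2 * (G z - a1)\<^sup>2"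
        by (rule sq_gap)
      with n0 n1 gap have False by linarith }
    then show ?thesis unfolding A0_def A1_def by auto
  qed
  define U0 where "U0 = \<Phi>0 -` A0 \<inter> space \<Omega>"
  define U1 where "U1 = \<Phi>1 -` A1 \<inter> space \<Omega>"
  have U0m: "U0 \<in> sets \<Omega>" unfolding U0_def using m0 A0m by (rule measurable_sets)
  have U1m: "U1 \<in> sets \<Omega>" unfolding U1_def using m1 A1m by (rule measurable_sets)
  have sub: "E \<subseteq> U0 \<union> U1"
  proof
    fix \<omega> assume w: "\<omega> \<in> E"
    then have ws: "\<omega> \<in> space \<Omega>" using E(1) sets.sets_into_space by blast
    have "\<Phi>0 \<omega> \<in> space Z" using m0 ws by (simp add: measurable_space)
    then have "\<Phi>0 \<omega> \<in> A0 \<or> \<Phi>1 \<omega> \<in> A1" using cov eq[OF w] by auto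
    then show "\<omega> \<in> U0 \<union> U1" using ws unfolding U0_def U1_def by auto
  qed
  have "1/2 \<le> emeasure \<Omega> E" by fact
  also have "\<dots> \<le> emeasure \<Omega> (U0 \<union> U1)" using sub U0m U1m by (intro emeasure_mono) auto
  also have "\<dots> \<le> emeasure \<Omega> U0 + emeasure \<Omega> U1" using U0m U1m by (rule emeasure_subadditive)
  also have "emeasure \<Omega> U0 = emeasure (distr \<Omega> Z \<Phi>0) A0"
    unfolding U0_def using m0 A0m by (simp add: emeasure_distr)
  also have "emeasure \<Omega> U1 = emeasure (distr \<Omega> Z \<Phi>1) A1"
    unfolding U1_def using m1 A1m by (simp add: emeasure_distr)
  finally show ?thesis unfolding A0_def A1_def by simp
qed

lemma coupling_int:
  fixes G :: "'b \<Rightarrow> real"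
  assumes P: "prob_space \<Omega>" and E: "E \<in> sets \<Omega>" "emeasure \<Omega> E \<ge> 1/2"
    and m0: "\<Phi>0 \<in> \<Omega> \<rightarrow>\<^sub>M Z" and m1: "\<Phi>1 \<in> \<Omega> \<rightarrow>\<^sub>M Z"
    and eq: "\<And>\<omega>. \<omega> \<in> E \<Longrightarrow> \<Phi>0 \<omega> = \<Phi>1 \<omega>"
    and G: "G \<in> borel_measurable Z"
  shows "(\<integral>\<^sup>+ z. ennreal ((G z - a0)\<^sup>2) \<partial>distr \<Omega> Z \<Phi>0)
       + (\<integral>\<^sup>+ z. ennreal ((G z - a1)\<^sup>2) \<partial>distr \<Omega> Z \<Phi>1) \<ge> ennreal ((a1 - a0)\<^sup>2 / 4)"
proof -
  have i0: "(\<integral>\<^sup>+ z. ennreal ((G z - a0)\<^sup>2) \<partial>distr \<Omega> Z \<Phi>0) = (\<integral>\<^sup>+ \<omega>. ennreal ((G (\<Phi>0 \<omega>) - a0)\<^sup>2) \<partial>\<Omega>)"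
    using m0 G by (intro nn_integral_distr) auto
  have i1: "(\<integral>\<^sup>+ z. ennreal ((G z - a1)\<^sup>2) \<partial>distr \<Omega> Z \<Phi>1) = (\<integral>\<^sup>+ \<omega>. ennreal ((G (\<Phi>1 \<omega>) - a1)\<^sup>2) \<partial>\<Omega>)"
    using m1 G by (intro nn_integral_distr) auto
  have "(\<integral>\<^sup>+ \<omega>. ennreal ((G (\<Phi>0 \<omega>) - a0)\<^sup>2) \<partial>\<Omega>) + (\<integral>\<^sup>+ \<omega>. ennreal ((G (\<Phi>1 \<omega>) - a1)\<^sup>2) \<partial>\<Omega>)
      = (\<integral>\<^sup>+ \<omega>. ennreal ((G (\<Phi>0 \<omega>) - a0)\<^sup>2) + ennreal ((G (\<Phi>1 \<omega>) - a1)\<^sup>2) \<partial>\<Omega>)"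
    using m0 m1 G by (intro nn_integral_add[symmetric]) auto
  also have "\<dots> \<ge> (\<integral>\<^sup>+ \<omega>. ennreal ((a1 - a0)\<^sup>2 / 2) * indicator E \<omega> \<partial>\<Omega>)"
  proof (intro nn_integral_mono)
    fix \<omega> assume "\<omega> \<in> space \<Omega>"
    show "ennreal ((a1 - a0)\<^sup>2 / 2) * indicator E \<omega>
        \<le> ennreal ((G (\<Phi>0 \<omega>) - a0)\<^sup>2) + ennreal ((G (\<Phi>1 \<omega>) - a1)\<^sup>2)"
    proof (cases "\<omega> \<in> E")
      case True
      have "(a1 - a0)\<^sup>2 / 2 \<le> (G (\<Phi>0 \<omega>) - a0)\<^sup>2 + (G (\<Phi>0 \<omega>) - a1)\<^sup>2"
        using sq_gap[of a1 a0 "G (\<Phi>0 \<omega>)"] by simp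
      then show ?thesis using True eq[OF True]
        by (simp add: ennreal_plus[symmetric] del: ennreal_plus)
    qed simp
  qed
  also have "(\<integral>\<^sup>+ \<omega>. ennreal ((a1 - a0)\<^sup>2 / 2) * indicator E \<omega> \<partial>\<Omega>) = ennreal ((a1 - a0)\<^sup>2 / 2) * emeasure \<Omega> E"
    using E by (simp add: nn_integral_cmult_indicator)
  finally have *: "ennreal ((a1 - a0)\<^sup>2 / 2) * emeasure \<Omega> E \<le> (\<integral>\<^sup>+ \<omega>. ennreal ((G (\<Phi>0 \<omega>) - a0)\<^sup>2) \<partial>\<Omega>) + (\<integral>\<^sup>+ \<omega>. ennreal ((G (\<Phi>1 \<omega>) - a1)\<^sup>2) \<partial>\<Omega>)" .
  have h2: "ennreal (1/2) = 1/2" by (simp add: divide_ennreal_def)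
  have "ennreal ((a1 - a0)\<^sup>2 / 4) = ennreal ((a1 - a0)\<^sup>2 / 2) * ennreal (1/2)"
    by (simp add: ennreal_mult'[symmetric] del: ennreal_half)
  also have "\<dots> \<le> ennreal ((a1 - a0)\<^sup>2 / 2) * emeasure \<Omega> E" unfolding h2 using E(2) by (intro mult_left_mono) auto
  finally show ?thesis using * i0 i1 by simp
qed



definition evt :: "nat \<Rightarrow> 'a set \<Rightarrow> (nat \<Rightarrow> 'a \<times> real) set" where
  "evt n B = PiE {..<n} (\<lambda>_. (UNIV - B) \<times> UNIV)"

lemma event_prob:
  fixes PX :: "'a::topological_space measure"
  assumes PX: "prob_space PX" "sets PX = sets borel"
    and fd: "(\<integral>\<^sup>+ x. ennreal (f x) \<partial>lborel) = 1" "f \<in> borel_measurable borel"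
    and B: "B \<in> sets borel" and small: "real n * measure PX B \<le> 1/2"
  shows "evt n B \<in> sets (PiM {..<n} (\<lambda>_. baseN PX f))"
    and "emeasure (PiM {..<n} (\<lambda>_. baseN PX f)) (evt n B) \<ge> 1/2"
proof -
  have pb: "prob_space (baseN PX f)" using prob_baseN PX fd by auto
  have pn: "prob_space (noiseM f)" using prob_noise fd by auto
  interpret PS: product_sigma_finite "\<lambda>_. baseN PX f"
    unfolding product_sigma_finite_def using pb by (simp add: prob_space_imp_sigma_finite)
  have spX: "space PX = UNIV" using sets_eq_imp_space_eq[OF PX(2)] by simp
  have Am: "(UNIV - B) \<times> (UNIV::real set) \<in> sets (baseN PX f)"
    using B by (simp add: sets_baseN[OF PX(2)])
  show "evt n B \<in> sets (PiM {..<n} (\<lambda>_. baseN PX f))"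
    unfolding evt_def using Am by (intro sets_PiM_I_finite) auto
  have "emeasure (PiM {..<n} (\<lambda>_. baseN PX f)) (evt n B) = (\<Prod>i\<in>{..<n}. emeasure (baseN PX f) ((UNIV - B) \<times> UNIV))"
    unfolding evt_def using Am by (intro PS.emeasure_PiM) auto
  also have "emeasure (baseN PX f) ((UNIV - B) \<times> UNIV) = emeasure PX (UNIV - B) * emeasure (noiseM f) UNIV"
    unfolding baseN_def using B PX(2) pn
    by (intro sigma_finite_measure.emeasure_pair_measure_Times prob_space_imp_sigma_finite) auto
  also have "emeasure (noiseM f) UNIV = 1"
    using prob_space.emeasure_space_1[OF pn] by (simp add: noiseM_def)
  also have "emeasure PX (UNIV - B) = ennreal (1 - measure PX B)"
    using prob_space.prob_compl[OF PX(1), of B] finite_measure.emeasure_eq_measure[OF prob_space.finite_measure[OF PX(1)]] B PX(2) spX by simp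
  finally have eq: "emeasure (PiM {..<n} (\<lambda>_. baseN PX f)) (evt n B) = ennreal ((1 - measure PX B) ^ n)"
    using prob_space.prob_le_1[OF PX(1)] by (simp add: ennreal_power)
  have "1 + real n * (- measure PX B) \<le> (1 + - measure PX B) ^ n"
    by (rule Bernoulli_inequality) (use prob_space.prob_le_1[OF PX(1)] in auto)
  then have "1/2 \<le> (1 - measure PX B) ^ n" using small by simp
  then have "ennreal (1/2) \<le> ennreal ((1 - measure PX B) ^ n)" by (rule ennreal_leI)
  moreover have "ennreal (1/2) = 1/2" by (simp add: divide_ennreal_def)
  ultimately show "emeasure (PiM {..<n} (\<lambda>_. baseN PX f)) (evt n B) \<ge> 1/2" using eq by simp
qed



lemma powr_subadd:
  fixes x y \<beta> :: real
  assumes "0 \<le> x" "0 \<le> y" "0 < \<beta>" "\<beta> \<le> 1"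
  shows "(x + y) powr \<beta> \<le> x powr \<beta> + y powr \<beta>"
proof (cases "x + y = 0")
  case True then show ?thesis using assms by auto
next
  case False
  define s where "s = x + y"
  have s: "s > 0" using False assms unfolding s_def by auto
  have "x / s \<le> (x / s) powr \<beta>"
    using powr_mono'[of \<beta> 1 "x/s"] assms s by (simp add: s_def)
  moreover have "y / s \<le> (y / s) powr \<beta>"
    using powr_mono'[of \<beta> 1 "y/s"] assms s by (simp add: s_def)
  ultimately have "x / s + y / s \<le> (x / s) powr \<beta> + (y / s) powr \<beta>" by simp
  moreover have "x / s + y / s = 1" using s by (simp add: add_divide_distrib[symmetric] s_def)
  moreover have "(x / s) powr \<beta> + (y / s) powr \<beta> = (x powr \<beta> + y powr \<beta>) / s powr \<beta>"
    by (simp add: powr_divide add_divide_distrib)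
  ultimately have "1 \<le> (x powr \<beta> + y powr \<beta>) / s powr \<beta>" by simp
  moreover have "s powr \<beta> > 0" using s by simp
  ultimately show ?thesis by (simp add: s_def pos_le_divide_eq)
qed

lemma powr_holder:
  fixes a b \<beta> :: real
  assumes "0 \<le> a" "0 \<le> b" "0 < \<beta>" "\<beta> \<le> 1"
  shows "\<bar>a powr \<beta> - b powr \<beta>\<bar> \<le> \<bar>a - b\<bar> powr \<beta>"
proof -
  { fix a b :: real assume ab: "0 \<le> b" "b \<le> a"
    have "a powr \<beta> = ((a - b) + b) powr \<beta>" by simp
    also have "\<dots> \<le> (a - b) powr \<beta> + b powr \<beta>" using ab assms by (intro powr_subadd) auto
    finally have "\<bar>a powr \<beta> - b powr \<beta>\<bar> \<le> \<bar>a - b\<bar> powr \<beta>"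
      using powr_mono2[of \<beta> b a] ab assms by auto }
  from this[of b a] this[of a b] assms show ?thesis
    by (cases "a \<le> b") (auto simp: abs_minus_commute)
qed

definition bumpf :: "real \<Rightarrow> real \<Rightarrow> real \<Rightarrow> 'a::metric_space set \<Rightarrow> 'a \<Rightarrow> real" where
  "bumpf C \<beta> r \<sigma> y = (if \<sigma> = {} then 0 else C * (max 0 (r - infdist y \<sigma>)) powr \<beta>)"

lemma bump_holder:
  assumes C: "C > 0" and r: "0 < r" "r \<le> 1" and b: "0 < \<beta>" "\<beta> \<le> 1"
  shows "bumpf C \<beta> r \<sigma> \<in> holder_class Y \<beta> C"
proof (cases "\<sigma> = {}")
  case True
  then show ?thesis using C unfolding holder_class_def bumpf_def by auto
next
  case False
  have cont: "continuous_on UNIV (\<lambda>y. C * (max 0 (r - infdist y \<sigma>)) powr \<beta>)"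
    by (intro continuous_intros continuous_on_powr') (use b in auto)
  have meas: "bumpf C \<beta> r \<sigma> \<in> borel_measurable borel"
    unfolding bumpf_def using False by (simp add: borel_measurable_continuous_onI[OF cont])
  have bound: "\<bar>bumpf C \<beta> r \<sigma> y\<bar> \<le> C" for y
  proof -
    have "max 0 (r - infdist y \<sigma>) \<le> 1" using r infdist_nonneg[of y \<sigma>] by auto
    then have "(max 0 (r - infdist y \<sigma>)) powr \<beta> \<le> 1" using b by (intro powr_le1) auto
    then show ?thesis using False C unfolding bumpf_def by (auto simp: abs_mult)
  qed
  have hol: "\<bar>bumpf C \<beta> r \<sigma> y - bumpf C \<beta> r \<sigma> z\<bar> \<le> C * dist y z powr \<beta>" for y z
  proof -
    have "\<bar>(max 0 (r - infdist y \<sigma>)) powr \<beta> - (max 0 (r - infdist z \<sigma>)) powr \<beta>\<bar>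
        \<le> \<bar>max 0 (r - infdist y \<sigma>) - max 0 (r - infdist z \<sigma>)\<bar> powr \<beta>"
      using b by (intro powr_holder) auto
    also have "\<dots> \<le> dist y z powr \<beta>"
    proof (intro powr_mono2)
      show "\<bar>max 0 (r - infdist y \<sigma>) - max 0 (r - infdist z \<sigma>)\<bar> \<le> dist y z"
        using infdist_triangle_abs[of y \<sigma> z] by (auto simp: max_def abs_if split: if_splits)
    qed (use b in auto)
    finally show ?thesis using False C unfolding bumpf_def
      by (simp add: right_diff_distrib[symmetric] abs_mult)
  qed
  show ?thesis unfolding holder_class_def using meas bound hol by auto
qed

lemma bump_center:
  assumes "i \<in> \<sigma>" shows "bumpf C \<beta> r \<sigma> i = C * (max 0 r) powr \<beta>"
  using assms unfolding bumpf_def by auto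

lemma bump_zero:
  assumes "i \<notin> \<sigma>" "\<And>j. j \<in> \<sigma> \<Longrightarrow> dist i j \<ge> r"
  shows "bumpf C \<beta> r \<sigma> i = 0"
proof (cases "\<sigma> = {}")
  case False
  have "r \<le> infdist i \<sigma>" unfolding infdist_notempty[OF False]
    by (rule cINF_greatest) (use False assms(2) in auto)
  then show ?thesis unfolding bumpf_def by simp
qed (simp add: bumpf_def)

lemma bump_insert:
  assumes "dist y i \<ge> r"
  shows "bumpf C \<beta> r (insert i \<sigma>) y = bumpf C \<beta> r \<sigma> y"
proof (cases "\<sigma> = {}")
  case True
  then show ?thesis using assms unfolding bumpf_def by simp
next
  case False
  have "infdist y (insert i \<sigma>) = min (dist y i) (infdist y \<sigma>)"
    using infdist_Un_min[of "{i}" \<sigma> y] False by simp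
  then have "max 0 (r - infdist y (insert i \<sigma>)) = max 0 (r - infdist y \<sigma>)"
    using assms by (auto simp: min_def max_def)
  then show ?thesis using False unfolding bumpf_def by simp
qed



lemma half_quarter: fixes Q :: ennreal assumes "1/2 \<le> Q + Q" shows "1/4 \<le> Q"
proof (cases Q rule: ennreal_cases)
  case (real q)
  have h: "ennreal (1/2) = 1/2" "ennreal (1/4) = 1/4" by (subst divide_ennreal[symmetric], auto)+
  have e: "Q + Q = ennreal (q+q)" using real by (simp only: ennreal_plus)
  have "ennreal (1/2) \<le> ennreal (q + q)" using assms unfolding e h(1) .
  then have "1/2 \<le> q + q" using real by (subst (asm) ennreal_le_iff) auto
  then have "ennreal (1/4) \<le> ennreal q" by (intro ennreal_leI) simp
  then show ?thesis using real unfolding h by simp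
qed simp

lemma Phi_meas:
  assumes "sets PX = sets borel" "g \<in> borel_measurable borel"
  shows "compose {..<n} (Tmap g) \<in> PiM {..<n} (\<lambda>_. baseN PX f) \<rightarrow>\<^sub>M PiM {..<n} (\<lambda>_. borel \<Otimes>\<^sub>M borel)"
proof -
  note [measurable] = Tmap_meas[OF assms]
  show ?thesis unfolding compose_def by measurable
qed

lemma sample_law_eq2:
  assumes PX: "prob_space PX" "sets PX = sets borel" and fd: "(\<integral>\<^sup>+ x. ennreal (f x) \<partial>lborel) = 1" "f \<in> borel_measurable borel"
    and g: "g \<in> borel_measurable borel"
  shows "sample_law n PX f g = distr (PiM {..<n} (\<lambda>_. baseN PX f)) (PiM {..<n} (\<lambda>_. borel \<Otimes>\<^sub>M borel))
            (compose {..<n} (Tmap g))"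
  unfolding sample_law_eq[OF PX fd g] by (intro distr_cong sets_PiM_cong) auto

lemma est_meas:
  assumes "estimator n gh"
  shows "(\<lambda>z. gh x z) \<in> borel_measurable (PiM {..<n} (\<lambda>_. borel \<Otimes>\<^sub>M borel))"
  using measurable_Pair2[OF assms[unfolded estimator_def], of x] by simp

lemma Phi_eq:
  assumes "\<And>y. dist y i \<ge> r \<Longrightarrow> g1 y = g0 y" "\<omega> \<in> evt n (ball i r)"
  shows "compose {..<n} (Tmap g0) \<omega> = compose {..<n} (Tmap g1) \<omega>"
proof -
  have "Tmap g0 (\<omega> j) = Tmap g1 (\<omega> j)" if "j < n" for j
  proof -
    obtain x e where xe: "\<omega> j = (x, e)" by fastforce
    have "\<omega> j \<in> (UNIV - ball i r) \<times> UNIV" using assms(2) that unfolding evt_def PiE_iff by blast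
    then have "x \<notin> ball i r" using xe by auto
    then have "dist x i \<ge> r" by (simp add: dist_commute)
    then show ?thesis using assms(1) xe by (simp add: Tmap_def)
  qed
  then show ?thesis unfolding compose_def by auto
qed

lemma core_b:
  fixes PX :: "'a::metric_space measure"
  assumes PX: "prob_space PX" "sets PX = sets borel" and fd: "(\<integral>\<^sup>+ x. ennreal (f x) \<partial>lborel) = 1" "f \<in> borel_measurable borel"
    and est: "estimator n gh" and iY: "i \<in> Y"
    and C: "C > 0" and r: "0 < r" "r \<le> 1" and b: "0 < \<beta>" "\<beta> \<le> 1"
    and small: "real n * measure PX (ball i r) \<le> 1/2"
    and gap: "(C * r powr \<beta>)\<^sup>2 > 4 * t"
  shows "(SUP g\<in>holder_class Y \<beta> C. SUP x\<in>Y. emeasure (sample_law n PX f g)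
             {z \<in> space (sample_law n PX f g). (gh x z - g x)\<^sup>2 > t}) \<ge> 1/4"
proof -
  define g0 where "g0 = bumpf C \<beta> r ({}::'a set)"
  define g1 where "g1 = bumpf C \<beta> r {i}"
  have H0: "g0 \<in> holder_class Y \<beta> C" unfolding g0_def by (rule bump_holder) (use C r b in auto)
  have H1: "g1 \<in> holder_class Y \<beta> C" unfolding g1_def by (rule bump_holder) (use C r b in auto)
  have m0: "g0 \<in> borel_measurable borel" using H0 by (simp add: holder_class_def)
  have m1: "g1 \<in> borel_measurable borel" using H1 by (simp add: holder_class_def)
  define \<Omega> where "\<Omega> = PiM {..<n} (\<lambda>_. baseN PX f)"
  define Z where "Z = PiM {..<n} (\<lambda>_. borel \<Otimes>\<^sub>M borel :: ('a \<times> real) measure)"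
  have P: "prob_space \<Omega>" unfolding \<Omega>_def using prob_baseN[OF PX(1) fd]
    by (intro prob_space_PiM) auto
  have S0: "sample_law n PX f g0 = distr \<Omega> Z (compose {..<n} (Tmap g0))"
    unfolding \<Omega>_def Z_def by (rule sample_law_eq2[OF PX fd m0])
  have S1: "sample_law n PX f g1 = distr \<Omega> Z (compose {..<n} (Tmap g1))"
    unfolding \<Omega>_def Z_def by (rule sample_law_eq2[OF PX fd m1])
  have Bm: "ball i r \<in> sets borel" by simp
  have key: "emeasure (distr \<Omega> Z (compose {..<n} (Tmap g0))) {z \<in> space (distr \<Omega> Z (compose {..<n} (Tmap g0))). (gh i z - g0 i)\<^sup>2 > t}
       + emeasure (distr \<Omega> Z (compose {..<n} (Tmap g1))) {z \<in> space (distr \<Omega> Z (compose {..<n} (Tmap g1))). (gh i z - g1 i)\<^sup>2 > t} \<ge> 1/2"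
  proof (rule coupling_prob[OF P])
    show "evt n (ball i r) \<in> sets \<Omega>" unfolding \<Omega>_def by (rule event_prob(1)[OF PX fd Bm small])
    show "1/2 \<le> emeasure \<Omega> (evt n (ball i r))" unfolding \<Omega>_def by (rule event_prob(2)[OF PX fd Bm small])
    show "compose {..<n} (Tmap g0) \<in> \<Omega> \<rightarrow>\<^sub>M Z" unfolding \<Omega>_def Z_def by (rule Phi_meas[OF PX(2) m0])
    show "compose {..<n} (Tmap g1) \<in> \<Omega> \<rightarrow>\<^sub>M Z" unfolding \<Omega>_def Z_def by (rule Phi_meas[OF PX(2) m1])
    show "compose {..<n} (Tmap g0) \<omega> = compose {..<n} (Tmap g1) \<omega>" if "\<omega> \<in> evt n (ball i r)" for \<omega>
      by (rule Phi_eq[OF _ that]) (simp add: g0_def g1_def bump_insert[where \<sigma>="{}", simplified])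
    show "(\<lambda>z. gh i z) \<in> borel_measurable Z" unfolding Z_def by (rule est_meas[OF est])
    have "g0 i = 0" by (simp add: g0_def bumpf_def)
    moreover have "g1 i = C * r powr \<beta>" using r by (simp add: g1_def bumpf_def)
    ultimately show "(g1 i - g0 i)\<^sup>2 > 4 * t" using gap by simp
  qed
  define Q where "Q = (SUP g\<in>holder_class Y \<beta> C. SUP x\<in>Y. emeasure (sample_law n PX f g)
             {z \<in> space (sample_law n PX f g). (gh x z - g x)\<^sup>2 > t})"
  have le: "emeasure (sample_law n PX f g) {z \<in> space (sample_law n PX f g). (gh i z - g i)\<^sup>2 > t} \<le> Q"
    if "g \<in> holder_class Y \<beta> C" for g
    unfolding Q_def
    by (rule SUP_upper2[OF that], rule SUP_upper2[OF iY]) simp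
  have "1/2 \<le> Q + Q" using key le[OF H0] le[OF H1] unfolding S0 S1 by (meson add_mono order_trans)
  then show ?thesis unfolding Q_def[symmetric] by (rule half_quarter)
qed



definition unifD :: "'a::topological_space set \<Rightarrow> 'a measure" where
  "unifD S = distr (uniform_count_measure S) borel (\<lambda>x. x)"

lemma unifD_meas: "(\<lambda>x. x) \<in> uniform_count_measure S \<rightarrow>\<^sub>M borel"
  by (subst measurable_cong_sets[OF sets_uniform_count_measure_count_space refl]) simp

lemma unifD_props:
  assumes "finite S" "S \<noteq> {}"
  shows "prob_space (unifD S)" "sets (unifD S) = sets borel"
    and "\<And>A. A \<in> sets borel \<Longrightarrow> emeasure (unifD S) A = card (A \<inter> S) / card S"
proof -
  show "prob_space (unifD S)" unfolding unifD_def
    by (intro prob_space.prob_space_distr prob_space_uniform_count_measure assms unifD_meas)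
  show "sets (unifD S) = sets borel" by (simp add: unifD_def)
  fix A :: "'a set" assume A: "A \<in> sets borel"
  have "emeasure (unifD S) A = emeasure (uniform_count_measure S) (A \<inter> S)"
    unfolding unifD_def using A by (subst emeasure_distr[OF unifD_meas]) (auto simp: space_uniform_count_measure Int_commute)
  also have "\<dots> = card (A \<inter> S) / card S" using assms by (intro emeasure_uniform_count_measure) auto
  finally show "emeasure (unifD S) A = card (A \<inter> S) / card S" .
qed



lemma half_gen: fixes Q :: ennreal assumes "ennreal (2 * a) \<le> Q + Q" "0 \<le> a" shows "ennreal a \<le> Q"
proof (cases Q rule: ennreal_cases)
  case (real q)
  have e: "Q + Q = ennreal (q+q)" using real by (simp only: ennreal_plus)
  have "ennreal (2 * a) \<le> ennreal (q + q)" using assms(1) unfolding e .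
  then have "2 * a \<le> q + q" using real by (subst (asm) ennreal_le_iff) auto
  then have "ennreal a \<le> ennreal q" by (intro ennreal_leI) simp
  then show ?thesis using real by simp
qed simp

lemma inv_nat_ennreal: "0 < M \<Longrightarrow> (1::ennreal) / of_nat M = ennreal (1 / real M)"
proof -
  assume M: "0 < M"
  have "(of_nat M :: ennreal) = ennreal (real M)" by (simp add: ennreal_of_nat_eq_real_of_nat)
  then show ?thesis using M by (simp add: divide_ennreal[symmetric, of 1 "real M", simplified])
qed

lemma core_a:
  fixes S :: "'a::metric_space set"
  assumes fd: "(\<integral>\<^sup>+ x. ennreal (f x) \<partial>lborel) = 1" "f \<in> borel_measurable borel"
    and est: "estimator n gh" and SY: "S \<subseteq> Y" and fin: "finite S" "S \<noteq> {}"
    and sep: "\<And>i j. i \<in> S \<Longrightarrow> j \<in> S \<Longrightarrow> i \<noteq> j \<Longrightarrow> 2 * r \<le> dist i j"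
    and C: "C > 0" and r: "0 < r" "r \<le> 1" and b: "0 < \<beta>" "\<beta> \<le> 1"
    and small: "2 * n \<le> card S"
  shows "ennreal ((C * r powr \<beta>)\<^sup>2 / 8) \<le> worst_risk n (unifD S) f (holder_class Y \<beta> C) gh"
proof -
  define PX where "PX = unifD S"
  have PX: "prob_space PX" "sets PX = sets borel" unfolding PX_def using unifD_props[OF fin] by auto
  have emPX: "\<And>A. A \<in> sets borel \<Longrightarrow> emeasure PX A = card (A \<inter> S) / card S"
    unfolding PX_def using unifD_props[OF fin] by auto
  define M where "M = card S"
  have M: "M > 0" unfolding M_def using fin by (simp add: card_gt_0_iff)
  define h where "h = C * r powr \<beta>"
  define u where "u = ennreal (h\<^sup>2 / 4)"
  define p where "p = ennreal (1 / real M)"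
  have ballS: "ball i r \<inter> S = {i}" if "i \<in> S" for i
  proof -
    { fix j assume j: "j \<in> S" "dist i j < r" "j \<noteq> i"
      with sep[OF that j(1)] r have False by auto }
    then show ?thesis using that r by (auto simp: ball_def)
  qed
  have emsing: "emeasure PX {i} = p" if "i \<in> S" for i
    using emPX[of "{i}"] that inv_nat_ennreal[OF M] unfolding M_def p_def by simp
  have smallB: "real n * measure PX (ball i r) \<le> 1/2" if "i \<in> S" for i
  proof -
    have "emeasure PX (ball i r) = ennreal (1 / real M)"
      using emPX[of "ball i r"] ballS[OF that] inv_nat_ennreal[OF M] unfolding M_def by simp
    then have "measure PX (ball i r) = 1 / real M" by (simp add: measure_def)
    moreover have "2 * real n \<le> real M" using small unfolding M_def by linarith
    then have "real n / real M \<le> 1/2" using M by (simp add: divide_le_eq)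
    ultimately show ?thesis by simp
  qed
  define D where "D = (\<lambda>g x. \<integral>\<^sup>+ z. ennreal ((gh x z - g x)\<^sup>2) \<partial>sample_law n PX f g)"
  define gs where "gs = (\<lambda>\<sigma>::'a set. bumpf C \<beta> r \<sigma>)"
  have Hs: "gs \<sigma> \<in> holder_class Y \<beta> C" for \<sigma> unfolding gs_def by (rule bump_holder) (use C r b in auto)
  have ms: "gs \<sigma> \<in> borel_measurable borel" for \<sigma> using Hs[of \<sigma>] by (simp add: holder_class_def)
  define \<Omega> where "\<Omega> = PiM {..<n} (\<lambda>_. baseN PX f)"
  define Z where "Z = PiM {..<n} (\<lambda>_. borel \<Otimes>\<^sub>M borel :: ('a \<times> real) measure)"
  have P: "prob_space \<Omega>" unfolding \<Omega>_def using prob_baseN[OF PX(1) fd]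
    by (intro prob_space_PiM) auto
  have Ss: "sample_law n PX f (gs \<sigma>) = distr \<Omega> Z (compose {..<n} (Tmap (gs \<sigma>)))" for \<sigma>
    unfolding \<Omega>_def Z_def by (rule sample_law_eq2[OF PX fd ms])
  have pair: "D (gs \<sigma>) i + D (gs (insert i \<sigma>)) i \<ge> u" if i: "i \<in> S" and \<sigma>: "\<sigma> \<subseteq> S - {i}" for i \<sigma>
  proof -
    have Bm: "ball i r \<in> sets borel" by simp
    have v0: "gs \<sigma> i = 0" unfolding gs_def
    proof (rule bump_zero)
      show "i \<notin> \<sigma>" using \<sigma> by auto
      fix j assume j: "j \<in> \<sigma>"
      then have "j \<in> S" "j \<noteq> i" using \<sigma> by auto
      then have "2 * r \<le> dist i j" using sep[OF i] by auto
      then show "r \<le> dist i j" using r by auto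
    qed
    have "gs (insert i \<sigma>) i = C * (max 0 r) powr \<beta>" unfolding gs_def by (rule bump_center) simp
    then have v1: "gs (insert i \<sigma>) i = h" using r by (simp add: h_def)
    have "ennreal ((h - 0)\<^sup>2 / 4) \<le> (\<integral>\<^sup>+ z. ennreal ((gh i z - 0)\<^sup>2) \<partial>distr \<Omega> Z (compose {..<n} (Tmap (gs \<sigma>))))
       + (\<integral>\<^sup>+ z. ennreal ((gh i z - h)\<^sup>2) \<partial>distr \<Omega> Z (compose {..<n} (Tmap (gs (insert i \<sigma>)))))"
    proof (rule coupling_int[OF P])
      show "evt n (ball i r) \<in> sets \<Omega>" unfolding \<Omega>_def by (rule event_prob(1)[OF PX fd Bm smallB[OF i]])
      show "1/2 \<le> emeasure \<Omega> (evt n (ball i r))" unfolding \<Omega>_def by (rule event_prob(2)[OF PX fd Bm smallB[OF i]])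
      show "compose {..<n} (Tmap (gs \<sigma>)) \<in> \<Omega> \<rightarrow>\<^sub>M Z" unfolding \<Omega>_def Z_def by (rule Phi_meas[OF PX(2) ms])
      show "compose {..<n} (Tmap (gs (insert i \<sigma>))) \<in> \<Omega> \<rightarrow>\<^sub>M Z" unfolding \<Omega>_def Z_def by (rule Phi_meas[OF PX(2) ms])
      show "compose {..<n} (Tmap (gs \<sigma>)) \<omega> = compose {..<n} (Tmap (gs (insert i \<sigma>))) \<omega>" if "\<omega> \<in> evt n (ball i r)" for \<omega>
        by (rule Phi_eq[OF _ that]) (simp add: gs_def bump_insert)
      show "(\<lambda>z. gh i z) \<in> borel_measurable Z" unfolding Z_def by (rule est_meas[OF est])
    qed
    then show ?thesis unfolding D_def Ss u_def using v0 v1 by simp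
  qed
  have sumPow: "(\<Sum>\<sigma>\<in>Pow S. D (gs \<sigma>) i) \<ge> of_nat (2 ^ (M - 1)) * u" if i: "i \<in> S" for i
  proof -
    define T where "T = S - {i}"
    have ST: "S = insert i T" "i \<notin> T" "finite T" using i fin unfolding T_def by auto
    have cT: "card T = M - 1" unfolding M_def ST(1) using ST by simp
    have "Pow S = Pow T \<union> insert i ` Pow T" unfolding ST(1) by (rule Pow_insert)
    moreover have "Pow T \<inter> insert i ` Pow T = {}" using ST(2) by auto
    ultimately have "(\<Sum>\<sigma>\<in>Pow S. D (gs \<sigma>) i) = (\<Sum>\<sigma>\<in>Pow T. D (gs \<sigma>) i) + (\<Sum>\<sigma>\<in>insert i ` Pow T. D (gs \<sigma>) i)"
      using ST(3) by (simp add: sum.union_disjoint)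
    also have "(\<Sum>\<sigma>\<in>insert i ` Pow T. D (gs \<sigma>) i) = (\<Sum>\<sigma>\<in>Pow T. D (gs (insert i \<sigma>)) i)"
    proof (rule sum.reindex_cong[where l="insert i"])
      show "inj_on (insert i) (Pow T)" using ST(2) by (auto simp: inj_on_def)
    qed auto
    also have "(\<Sum>\<sigma>\<in>Pow T. D (gs \<sigma>) i) + (\<Sum>\<sigma>\<in>Pow T. D (gs (insert i \<sigma>)) i)
        = (\<Sum>\<sigma>\<in>Pow T. D (gs \<sigma>) i + D (gs (insert i \<sigma>)) i)" by (simp add: sum.distrib)
    also have "\<dots> \<ge> (\<Sum>\<sigma>\<in>Pow T. u)" by (intro sum_mono pair[OF i]) (auto simp: T_def)
    finally show ?thesis using ST cT by (simp add: card_Pow)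
  qed
  define W where "W = worst_risk n PX f (holder_class Y \<beta> C) gh"
  have riskW: "(\<integral>\<^sup>+ x. D (gs \<sigma>) x \<partial>PX) \<le> W" for \<sigma>
    unfolding W_def worst_risk_def D_def by (rule SUP_upper2[OF Hs[of \<sigma>]]) simp
  have singm: "{i} \<in> sets PX" for i using PX(2) by simp
  have risk_lb: "(\<Sum>i\<in>S. D g i * p) \<le> (\<integral>\<^sup>+ x. D g x \<partial>PX)" for g
  proof -
    have "(\<Sum>i\<in>S. D g i * p) = (\<Sum>i\<in>S. \<integral>\<^sup>+ x. D g i * indicator {i} x \<partial>PX)"
      by (intro sum.cong refl) (simp add: nn_integral_cmult_indicator[OF singm] emsing)
    also have "\<dots> = \<integral>\<^sup>+ x. (\<Sum>i\<in>S. D g i * indicator {i} x) \<partial>PX"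
      by (rule nn_integral_sum[symmetric]) (use singm in auto)
    also have "\<dots> \<le> \<integral>\<^sup>+ x. D g x \<partial>PX"
    proof (intro nn_integral_mono)
      fix x
      have "(\<Sum>i\<in>S. D g i * indicator {i} x) = (\<Sum>i\<in>S. if i = x then D g x else 0)"
        by (intro sum.cong) (auto simp: indicator_def)
      also have "\<dots> \<le> D g x" using fin(1) by (simp add: sum.delta)
      finally show "(\<Sum>i\<in>S. D g i * indicator {i} x) \<le> D g x" .
    qed
    finally show ?thesis .
  qed
  have Mp: "of_nat M * p = 1" unfolding p_def using M
    by (simp add: ennreal_of_nat_eq_real_of_nat ennreal_mult'[symmetric])
  have A: "(\<Sum>\<sigma>\<in>Pow S. \<integral>\<^sup>+ x. D (gs \<sigma>) x \<partial>PX) \<le> of_nat (2 ^ M) * W"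
    using sum_bounded_above[of "Pow S" "\<lambda>\<sigma>. \<integral>\<^sup>+ x. D (gs \<sigma>) x \<partial>PX" W] riskW fin(1)
    by (simp add: card_Pow M_def)
  have "(\<Sum>i\<in>S. of_nat (2 ^ (M - 1)) * u * p) = of_nat M * (of_nat (2 ^ (M - 1)) * u * p)"
    unfolding M_def by (rule sum_constant)
  also have "\<dots> = of_nat (2 ^ (M - 1)) * u * (of_nat M * p)" by (simp only: ac_simps)
  finally have "of_nat (2 ^ (M - 1)) * u = (\<Sum>i\<in>S. of_nat (2 ^ (M - 1)) * u * p)"
    unfolding Mp by simp
  also have "\<dots> \<le> (\<Sum>i\<in>S. (\<Sum>\<sigma>\<in>Pow S. D (gs \<sigma>) i) * p)"
    by (intro sum_mono mult_right_mono sumPow) auto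
  also have "\<dots> = (\<Sum>\<sigma>\<in>Pow S. \<Sum>i\<in>S. D (gs \<sigma>) i * p)"
    by (simp add: sum_distrib_right sum.swap[of _ S])
  also have "\<dots> \<le> (\<Sum>\<sigma>\<in>Pow S. \<integral>\<^sup>+ x. D (gs \<sigma>) x \<partial>PX)"
    by (intro sum_mono risk_lb)
  also have "\<dots> \<le> of_nat (2 ^ M) * W" by (rule A)
  also have "of_nat (2 ^ M) * W = of_nat (2 ^ (M - 1)) * (W + W)"
  proof -
    have "(2::nat) ^ M = 2 ^ (M - 1) * 2" using M by (cases M) auto
    then show ?thesis by (simp add: mult_2_right[symmetric] mult.assoc mult.commute)
  qed
  finally have "u \<le> W + W"
    by (subst (asm) ennreal_mult_le_mult_iff) (auto simp: power_eq_top_ennreal)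
  then have "ennreal (2 * (h\<^sup>2 / 8)) \<le> W + W" unfolding u_def by simp
  then have "ennreal (h\<^sup>2 / 8) \<le> W" by (rule half_gen) simp
  then show ?thesis unfolding W_def PX_def h_def .
qed



lemma packing:
  fixes Y :: "'a::metric_space set"
  assumes K: "K \<le> covering_number s Y" and s: "s > 0"
  shows "\<exists>S \<subseteq> Y. finite S \<and> K \<le> card S \<and> (\<forall>i\<in>S. \<forall>j\<in>S. i \<noteq> j \<longrightarrow> s \<le> dist i j)"
proof (rule ccontr)
  assume nex: "\<not> ?thesis"
  define P where "P = (\<lambda>S. S \<subseteq> Y \<and> finite S \<and> (\<forall>i\<in>S. \<forall>j\<in>S. i \<noteq> j \<longrightarrow> s \<le> dist i j))"
  have bnd: "\<forall>S. P S \<longrightarrow> card S < K"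
  proof (intro allI impI)
    fix S assume PS: "P S"
    show "card S < K"
    proof (rule ccontr)
      assume "\<not> card S < K"
      then have "K \<le> card S" by simp
      with PS nex show False unfolding P_def by blast
    qed
  qed
  have "P {}" unfolding P_def by simp
  from Lattices_Big.ex_has_greatest_nat[of P "{}" card K, OF this bnd]
  obtain S where S: "P S" and mx: "\<And>T. P T \<Longrightarrow> card T \<le> card S" by blast
  have cov: "Y \<subseteq> (\<Union>c\<in>S. ball c s)"
  proof
    fix y assume y: "y \<in> Y"
    show "y \<in> (\<Union>c\<in>S. ball c s)"
    proof (rule ccontr)
      assume ny: "y \<notin> (\<Union>c\<in>S. ball c s)"
      then have far: "\<forall>c\<in>S. s \<le> dist c y" by (auto simp: not_less)
      have yS: "y \<notin> S"
      proof
        assume "y \<in> S"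
        with far have "s \<le> 0" by auto
        with s show False by simp
      qed
      have "P (insert y S)" using S y far unfolding P_def by (auto simp: dist_commute)
      then have "card (insert y S) \<le> card S" by (rule mx)
      moreover have "card (insert y S) = Suc (card S)" using S yS unfolding P_def by simp
      ultimately show False by simp
    qed
  qed
  have "covering_number s Y \<le> card S"
    unfolding covering_number_def using S cov unfolding P_def
    by (intro cInf_lower) auto
  with K bnd S show False by auto
qed



lemma scale_facts:
  fixes a \<gamma> \<beta> C L :: real
  assumes a: "a > 0" and g: "\<gamma> > 0" and L: "L > 0"
  shows "(a / L) powr (1/\<gamma>) > 0"
    and "a * ((a / L) powr (1/\<gamma>)) powr (-\<gamma>) = L"
    and "(C * ((a / L) powr (1/\<gamma>) / 2) powr \<beta>)\<^sup>2 = C\<^sup>2 * (1/2) powr (2*\<beta>) * a powr (2*\<beta>/\<gamma>) * L powr (-2*\<beta>/\<gamma>)"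
    and "\<And>m. m > 0 \<Longrightarrow> a / L < m powr \<gamma> \<Longrightarrow> (a/L) powr (1/\<gamma>) < m"
proof -
  have aL: "a / L > 0" using a L by simp
  show "(a / L) powr (1/\<gamma>) > 0" using a L by simp
  have "((a / L) powr (1/\<gamma>)) powr (-\<gamma>) = (a / L) powr (-1)"
    using g by (simp add: powr_powr)
  also have "\<dots> = L / a" using aL a L by (simp add: powr_minus_divide)
  finally show "a * ((a / L) powr (1/\<gamma>)) powr (-\<gamma>) = L" using a by simp
  define q where "q = (a / L) powr (1/\<gamma>)"
  have q: "q > 0" unfolding q_def using a L by simp
  have "((q / 2) powr \<beta>)\<^sup>2 = (q / 2) powr (2 * \<beta>)"
    using q by (simp add: powr_power)
  also have "\<dots> = q powr (2*\<beta>) * (1/2) powr (2*\<beta>)"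
    using powr_mult[of q "1/2" "2*\<beta>"] by simp
  also have "q powr (2*\<beta>) = (a / L) powr (2*\<beta>/\<gamma>)" unfolding q_def by (simp add: powr_powr)
  also have "\<dots> = a powr (2*\<beta>/\<gamma>) * L powr (-2*\<beta>/\<gamma>)"
  proof -
    have "(a / L) powr (2*\<beta>/\<gamma>) = a powr (2*\<beta>/\<gamma>) / L powr (2*\<beta>/\<gamma>)" by (rule powr_divide)
    also have "L powr (-2*\<beta>/\<gamma>) = inverse (L powr (2*\<beta>/\<gamma>))"
      using powr_minus[of L "2*\<beta>/\<gamma>"] by simp
    ultimately show ?thesis by (simp add: divide_inverse)
  qed
  finally have "((q / 2) powr \<beta>)\<^sup>2 = a powr (2*\<beta>/\<gamma>) * L powr (-2*\<beta>/\<gamma>) * (1/2) powr (2*\<beta>)" .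
  then show "(C * ((a / L) powr (1/\<gamma>) / 2) powr \<beta>)\<^sup>2 = C\<^sup>2 * (1/2) powr (2*\<beta>) * a powr (2*\<beta>/\<gamma>) * L powr (-2*\<beta>/\<gamma>)"
    unfolding q_def[symmetric] by (simp add: power_mult_distrib)
  fix m :: real assume m: "m > 0" "a / L < m powr \<gamma>"
  have "(a/L) powr (1/\<gamma>) < (m powr \<gamma>) powr (1/\<gamma>)"
    using m aL g by (intro powr_less_mono2) auto
  also have "\<dots> = m" using g m by (simp add: powr_powr)
  finally show "(a/L) powr (1/\<gamma>) < m" .
qed



lemma pigeonhole_ball:
  fixes PX :: "'a::metric_space measure"
  assumes PX: "prob_space PX" "sets PX = sets borel"
    and fin: "finite S" "S \<noteq> {}" and card: "2 * n \<le> card S"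
    and sep: "\<forall>i\<in>S. \<forall>j\<in>S. i \<noteq> j \<longrightarrow> 2 * r \<le> dist i j"
  shows "\<exists>i\<in>S. real n * measure PX (ball i r) \<le> 1/2"
proof (rule ccontr)
  assume "\<not> ?thesis"
  then have big: "\<And>i. i \<in> S \<Longrightarrow> real n * measure PX (ball i r) > 1/2" by (auto simp: not_le)
  have npos: "n > 0"
  proof (rule ccontr)
    assume "\<not> n > 0"
    then have "n = 0" by simp
    with big fin show False by auto
  qed
  define M where "M = card S"
  have M: "real M \<ge> 2 * real n" using card unfolding M_def by linarith
  have Mp: "M > 0" using fin unfolding M_def by (simp add: card_gt_0_iff)
  have lb: "1 / real M < measure PX (ball i r)" if "i \<in> S" for i
  proof -
    have "1 / real M \<le> 1 / (2 * real n)" using M npos by (intro divide_left_mono) auto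
    also have "\<dots> < measure PX (ball i r)" using big[OF that] npos by (simp add: field_simps)
    finally show ?thesis .
  qed
  have disj: "disjoint_family_on (\<lambda>i. ball i r) S"
  proof (unfold disjoint_family_on_def, intro ballI impI)
    fix i j assume ij: "i \<in> S" "j \<in> S" "i \<noteq> j"
    show "ball i r \<inter> ball j r = {}"
    proof (rule ccontr)
      assume "ball i r \<inter> ball j r \<noteq> {}"
      then obtain x where "dist i x < r" "dist j x < r" by auto
      then have "dist i j < 2 * r" using dist_triangle[of i j x] by (simp add: dist_commute)
      moreover from sep ij have "2 * r \<le> dist i j" by blast
      ultimately show False by simp
    qed
  qed
  interpret P: prob_space PX by fact
  have "measure PX (\<Union>i\<in>S. ball i r) = (\<Sum>i\<in>S. measure PX (ball i r))"
  proof (rule P.finite_measure_finite_Union)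
    show "finite S" by fact
    show "disjoint_family_on (\<lambda>i. ball i r) S" by fact
    show "(\<lambda>i. ball i r) ` S \<subseteq> P.events" unfolding PX(2) by (intro image_subsetI) simp
  qed
  moreover have "measure PX (\<Union>i\<in>S. ball i r) \<le> 1" by (rule P.prob_le_1)
  moreover have "(\<Sum>i\<in>S. 1 / real M) < (\<Sum>i\<in>S. measure PX (ball i r))"
    using fin lb by (intro sum_strict_mono) auto
  moreover have "(\<Sum>i\<in>S. 1 / real M) = 1" using Mp unfolding M_def by simp
  ultimately show False by simp
qed



theorem theorem2:
  fixes Y :: "'a::polish_space set"
    and s0 cx0 cx1 \<gamma> C \<beta> :: real
    and f :: "real \<Rightarrow> real"
  assumes Y_borel: "Y \<in> sets borel"
    and Y_compact: "compact Y"
    and s0_pos: "s0 > 0" and cx0_pos: "0 < cx0" and cx01: "cx0 < cx1" and gamma_pos: "\<gamma> > 0"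
    and entropy: "\<And>s. 0 < s \<Longrightarrow> s < s0 \<Longrightarrow>
        cx0 * s powr (-\<gamma>) \<le> ln (real (covering_number s Y)) \<and>
        ln (real (covering_number s Y)) \<le> cx1 * s powr (-\<gamma>)"
    and C_pos: "C > 0" and beta: "0 < \<beta>" "\<beta> \<le> 1"
    and f_nonneg: "\<And>x. f x \<ge> 0"
    and f_density: "(\<integral>\<^sup>+ x. ennreal (f x) \<partial>lborel) = 1"
    and f_C1: "f C1_differentiable_on UNIV"
    and f_fisher: "integrable lborel (\<lambda>x. (deriv f x)\<^sup>2 / f x)"
  shows
    "(\<exists>PX :: nat \<Rightarrow> 'a measure. (\<forall>n. design Y (PX n)) \<and>
        \<not> (\<exists>gh. (\<forall>n. estimator n (gh n)) \<and>
             (\<lambda>n. worst_risk n (PX n) f (holder_class Y \<beta> C) (gh n)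
                    * ennreal (ln (real n) powr (2 * \<beta> / \<gamma>))) \<longlonglongrightarrow> 0))
     \<and>
     (\<exists>c > 0. \<forall>(PX :: nat \<Rightarrow> 'a measure) gh. (\<forall>n. design Y (PX n)) \<longrightarrow> (\<forall>n. estimator n (gh n)) \<longrightarrow>
        liminf (\<lambda>n. SUP g\<in>holder_class Y \<beta> C. SUP x\<in>Y.
           emeasure (sample_law n (PX n) f g)
             {z \<in> space (sample_law n (PX n) f g).
                (gh n x z - g x)\<^sup>2 > c * ln (real n) powr (- 2 * \<beta> / \<gamma>)}) > 0)"
proof -
  have fm: "f \<in> borel_measurable borel"
  proof -
    have "\<forall>x\<in>UNIV. f differentiable at x" using f_C1 by (simp add: C1_differentiable_on_eq)
    then have "continuous_on UNIV f"
      by (intro continuous_at_imp_continuous_on) (auto intro: differentiable_imp_continuous_within)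
    then show ?thesis by (rule borel_measurable_continuous_onI)
  qed
  define a where "a = cx0 / 2"
  have a: "a > 0" unfolding a_def using cx0_pos by simp
  define m where "m = min s0 1"
  have m: "m > 0" "m \<le> s0" "m \<le> 1" unfolding m_def using s0_pos by auto
  define sn where "sn = (\<lambda>n::nat. (a / ln (real n)) powr (1/\<gamma>))"
  define rn where "rn = (\<lambda>n. sn n / 2)"
  define c0 where "c0 = C\<^sup>2 * (1/2) powr (2*\<beta>) * a powr (2*\<beta>/\<gamma>)"
  have c0: "c0 > 0" unfolding c0_def using C_pos a by simp
  define N0 where "N0 = nat \<lceil>exp (a / m powr \<gamma> + 1)\<rceil> + 2"
  have nfacts: "2 \<le> n \<and> 0 < ln (real n) \<and> 0 < rn n \<and> rn n \<le> 1
      \<and> (\<exists>S\<subseteq>Y. finite S \<and> n^2 \<le> card S \<and> (\<forall>i\<in>S. \<forall>j\<in>S. i \<noteq> j \<longrightarrow> 2 * rn n \<le> dist i j))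
      \<and> (C * rn n powr \<beta>)\<^sup>2 = c0 * ln (real n) powr (-2*\<beta>/\<gamma>)" if n: "N0 \<le> n" for n
  proof -
    have n2: "2 \<le> n" using n unfolding N0_def by simp
    define e where "e = a / m powr \<gamma> + 1"
    have e0: "a / m powr \<gamma> \<ge> 0" using a m by simp
    have "exp e \<le> real (nat \<lceil>exp e\<rceil>)" by linarith
    also have "\<dots> \<le> real n" using n unfolding N0_def e_def by simp
    finally have en: "exp e \<le> real n" .
    have npos: "real n > 0" using n2 by simp
    have Le: "e \<le> ln (real n)" using en npos by (simp add: ln_ge_iff)
    define L where "L = ln (real n)"
    have L: "L > 0" "L > a / m powr \<gamma>" using Le e0 unfolding L_def e_def by linarith+
    have aLm: "a / L < m powr \<gamma>"
    proof -
      have "a / m powr \<gamma> < L" by fact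
      then have "a < L * m powr \<gamma>" using m by (simp add: divide_less_eq)
      then show ?thesis using L by (simp add: divide_less_eq mult.commute)
    qed
    have s: "sn n > 0" "a * sn n powr (-\<gamma>) = L" "sn n < m"
      using scale_facts(1,2)[OF a gamma_pos L(1)] scale_facts(4)[OF a gamma_pos L(1) m(1) aLm]
      unfolding sn_def L_def by auto
    have rpos: "0 < rn n" "rn n \<le> 1" using s m unfolding rn_def by auto
    have ent: "cx0 * sn n powr (-\<gamma>) \<le> ln (real (covering_number (sn n) Y))"
      using entropy[of "sn n"] s m by auto
    have "cx0 * sn n powr (-\<gamma>) = 2 * L" using s(2) unfolding a_def by simp
    also have "2 * L = ln (real n ^ 2)" unfolding L_def using npos by (simp add: ln_realpow)
    finally have lnc: "ln (real n ^ 2) \<le> ln (real (covering_number (sn n) Y))" using ent by simp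
    have cpos: "real (covering_number (sn n) Y) > 0"
    proof (rule ccontr)
      assume "\<not> ?thesis"
      then have "real (covering_number (sn n) Y) = 0" by simp
      with lnc have "ln (real n ^ 2) \<le> 0" by simp
      moreover have "ln (real n ^ 2) > 0" using n2 by simp
      ultimately show False by simp
    qed
    have "real n ^ 2 \<le> real (covering_number (sn n) Y)" using lnc cpos npos by simp
    then have cov: "n^2 \<le> covering_number (sn n) Y" by (simp add: of_nat_le_iff[symmetric] del: of_nat_le_iff)
    have pk: "\<exists>S\<subseteq>Y. finite S \<and> n^2 \<le> card S \<and> (\<forall>i\<in>S. \<forall>j\<in>S. i \<noteq> j \<longrightarrow> 2 * rn n \<le> dist i j)"
      using packing[OF cov s(1)] unfolding rn_def by simp
    have "(C * rn n powr \<beta>)\<^sup>2 = c0 * ln (real n) powr (-2*\<beta>/\<gamma>)"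
      using scale_facts(3)[OF a gamma_pos L(1), of C \<beta>] unfolding rn_def sn_def c0_def L_def by simp
    with n2 L rpos pk show ?thesis unfolding L_def by auto
  qed
  have L'pos: "ln (real n) powr (-2*\<beta>/\<gamma>) > 0" if "N0 \<le> n" for n
    using nfacts[OF that] by simp
  have partb: "\<exists>c > 0. \<forall>(PX :: nat \<Rightarrow> 'a measure) gh. (\<forall>n. design Y (PX n)) \<longrightarrow> (\<forall>n. estimator n (gh n)) \<longrightarrow>
        liminf (\<lambda>n. SUP g\<in>holder_class Y \<beta> C. SUP x\<in>Y.
           emeasure (sample_law n (PX n) f g)
             {z \<in> space (sample_law n (PX n) f g).
                (gh n x z - g x)\<^sup>2 > c * ln (real n) powr (- 2 * \<beta> / \<gamma>)}) > 0"
  proof (intro exI[of _ "c0/8"] conjI allI impI)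
    show "c0 / 8 > 0" using c0 by simp
    fix PX :: "nat \<Rightarrow> 'a measure" and gh :: "nat \<Rightarrow> 'a \<Rightarrow> (nat \<Rightarrow> 'a \<times> real) \<Rightarrow> real"
    assume des: "\<forall>n. design Y (PX n)" and est: "\<forall>n. estimator n (gh n)"
    have ev: "\<forall>\<^sub>F n in sequentially. 1/4 \<le> (SUP g\<in>holder_class Y \<beta> C. SUP x\<in>Y.
           emeasure (sample_law n (PX n) f g)
             {z \<in> space (sample_law n (PX n) f g).
                (gh n x z - g x)\<^sup>2 > c0/8 * ln (real n) powr (- 2 * \<beta> / \<gamma>)})"
    proof (rule eventually_sequentiallyI[of N0])
      fix n assume n: "N0 \<le> n"
      note nf = nfacts[OF n]
      have PXn: "prob_space (PX n)" "sets (PX n) = sets borel" using des by (auto simp: design_def)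
      obtain S where S: "S \<subseteq> Y" "finite S" "n^2 \<le> card S" "\<forall>i\<in>S. \<forall>j\<in>S. i \<noteq> j \<longrightarrow> 2 * rn n \<le> dist i j"
        using nf by blast
      have "2 * n \<le> n^2" using nf by (simp add: power2_eq_square)
      then have c2: "2 * n \<le> card S" using S(3) by linarith
      have Sne: "S \<noteq> {}" using c2 nf by auto
      obtain i where i: "i \<in> S" "real n * measure (PX n) (ball i (rn n)) \<le> 1/2"
        using pigeonhole_ball[OF PXn S(2) Sne c2 S(4)] by blast
      show "1/4 \<le> (SUP g\<in>holder_class Y \<beta> C. SUP x\<in>Y.
           emeasure (sample_law n (PX n) f g)
             {z \<in> space (sample_law n (PX n) f g).
                (gh n x z - g x)\<^sup>2 > c0/8 * ln (real n) powr (- 2 * \<beta> / \<gamma>)})"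
      proof (rule core_b[OF PXn f_density fm])
        show "estimator n (gh n)" using est by simp
        show "i \<in> Y" using i S by auto
        show "0 < rn n" "rn n \<le> 1" using nf by auto
        show "real n * measure (PX n) (ball i (rn n)) \<le> 1/2" by (rule i(2))
        have "4 * (c0/8 * ln (real n) powr (- 2 * \<beta> / \<gamma>)) < c0 * ln (real n) powr (- 2 * \<beta> / \<gamma>)"
          using c0 L'pos[OF n] by simp
        then show "4 * (c0/8 * ln (real n) powr (- 2 * \<beta> / \<gamma>)) < (C * rn n powr \<beta>)\<^sup>2"
          using nf by simp
      qed (use C_pos beta in auto)
    qed
    have "1/4 \<le> liminf (\<lambda>n. SUP g\<in>holder_class Y \<beta> C. SUP x\<in>Y.
           emeasure (sample_law n (PX n) f g)
             {z \<in> space (sample_law n (PX n) f g).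
                (gh n x z - g x)\<^sup>2 > c0/8 * ln (real n) powr (- 2 * \<beta> / \<gamma>)})"
      by (rule Liminf_bounded[OF ev])
    moreover have "(0::ennreal) < 1/4" by (simp add: ennreal_zero_less_divide)
    ultimately show "liminf (\<lambda>n. SUP g\<in>holder_class Y \<beta> C. SUP x\<in>Y.
           emeasure (sample_law n (PX n) f g)
             {z \<in> space (sample_law n (PX n) f g).
                (gh n x z - g x)\<^sup>2 > c0/8 * ln (real n) powr (- 2 * \<beta> / \<gamma>)}) > 0"
      by (meson order_less_le_trans)
  qed
  have Sex: "\<exists>S. S \<subseteq> Y \<and> finite S \<and> S \<noteq> {} \<and> (N0 \<le> n \<longrightarrow> 2 * n \<le> card S \<and>
      (\<forall>i\<in>S. \<forall>j\<in>S. i \<noteq> j \<longrightarrow> 2 * rn n \<le> dist i j))" for n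
  proof (cases "N0 \<le> n")
    case True
    note nf = nfacts[OF True]
    obtain S where S: "S \<subseteq> Y" "finite S" "n^2 \<le> card S" "\<forall>i\<in>S. \<forall>j\<in>S. i \<noteq> j \<longrightarrow> 2 * rn n \<le> dist i j"
      using nf by blast
    have "2 * n \<le> n^2" using nf by (simp add: power2_eq_square)
    then have c2: "2 * n \<le> card S" using S(3) by linarith
    have Sne: "S \<noteq> {}" using c2 nf by auto
    show ?thesis using S c2 Sne by blast
  next
    case False
    obtain S where S: "S \<subseteq> Y" "N0^2 \<le> card S" using nfacts[of N0] by auto
    have "0 < N0^2" using nfacts[of N0] by simp
    then have "card S > 0" using S(2) by linarith
    then obtain y where "y \<in> S" using card_gt_0_iff by fastforce
    then have "y \<in> Y" using S by auto
    then show ?thesis using False by (intro exI[of _ "{y}"]) auto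
  qed
  then obtain Sf where Sf: "\<And>n. Sf n \<subseteq> Y \<and> finite (Sf n) \<and> Sf n \<noteq> {} \<and> (N0 \<le> n \<longrightarrow> 2 * n \<le> card (Sf n) \<and>
      (\<forall>i\<in>Sf n. \<forall>j\<in>Sf n. i \<noteq> j \<longrightarrow> 2 * rn n \<le> dist i j))"
    by metis
  define PX where "PX = (\<lambda>n. unifD (Sf n))"
  have des: "design Y (PX n)" for n
  proof -
    have fn: "finite (Sf n)" "Sf n \<noteq> {}" using Sf by auto
    note U = unifD_props[OF fn]
    have "emeasure (PX n) Y = 1"
      unfolding PX_def using U(3)[OF Y_borel] Sf[of n] by (simp add: Int_absorb1 Int_commute)
    then show ?thesis unfolding design_def PX_def using U(1,2) by auto
  qed
  have parta: "\<not> (\<exists>gh. (\<forall>n. estimator n (gh n)) \<and>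
             (\<lambda>n. worst_risk n (PX n) f (holder_class Y \<beta> C) (gh n)
                    * ennreal (ln (real n) powr (2 * \<beta> / \<gamma>))) \<longlonglongrightarrow> 0)"
  proof
    assume "\<exists>gh. (\<forall>n. estimator n (gh n)) \<and>
             (\<lambda>n. worst_risk n (PX n) f (holder_class Y \<beta> C) (gh n)
                    * ennreal (ln (real n) powr (2 * \<beta> / \<gamma>))) \<longlonglongrightarrow> 0"
    then obtain gh where est: "\<And>n. estimator n (gh n)"
      and lim: "(\<lambda>n. worst_risk n (PX n) f (holder_class Y \<beta> C) (gh n)
                    * ennreal (ln (real n) powr (2 * \<beta> / \<gamma>))) \<longlonglongrightarrow> 0" by blast
    have ev1: "\<forall>\<^sub>F n in sequentially. worst_risk n (PX n) f (holder_class Y \<beta> C) (gh n)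
                    * ennreal (ln (real n) powr (2 * \<beta> / \<gamma>)) < ennreal (c0 / 8)"
      using lim c0 by (intro order_tendstoD(2)) auto
    have ev2: "\<forall>\<^sub>F n in sequentially. ennreal (c0 / 8) \<le> worst_risk n (PX n) f (holder_class Y \<beta> C) (gh n)
                    * ennreal (ln (real n) powr (2 * \<beta> / \<gamma>))"
    proof (rule eventually_sequentiallyI[of N0])
      fix n assume n: "N0 \<le> n"
      note nf = nfacts[OF n]
      have Sn: "Sf n \<subseteq> Y" "finite (Sf n)" "Sf n \<noteq> {}" "2 * n \<le> card (Sf n)"
        "\<And>i j. i \<in> Sf n \<Longrightarrow> j \<in> Sf n \<Longrightarrow> i \<noteq> j \<Longrightarrow> 2 * rn n \<le> dist i j"
        using Sf[of n] n by auto
      have W: "ennreal ((C * rn n powr \<beta>)\<^sup>2 / 8) \<le> worst_risk n (PX n) f (holder_class Y \<beta> C) (gh n)"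
        unfolding PX_def
        by (rule core_a[OF f_density fm est Sn(1,2,3) Sn(5) C_pos _ _ beta Sn(4)]) (use nf in auto)
      define Lp where "Lp = ln (real n) powr (2 * \<beta> / \<gamma>)"
      have Lp: "Lp > 0" unfolding Lp_def using nf by simp
      have prod1: "ln (real n) powr (-2*\<beta>/\<gamma>) * Lp = 1"
        unfolding Lp_def using nf by (simp add: powr_add[symmetric])
      have "ennreal (c0 / 8) = ennreal ((C * rn n powr \<beta>)\<^sup>2 / 8) * ennreal Lp"
        using nf prod1 Lp c0 by (simp add: ennreal_mult'[symmetric] field_simps)
      also have "\<dots> \<le> worst_risk n (PX n) f (holder_class Y \<beta> C) (gh n) * ennreal Lp"
        by (intro mult_right_mono W) simp
      finally show "ennreal (c0 / 8) \<le> worst_risk n (PX n) f (holder_class Y \<beta> C) (gh n)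
                    * ennreal (ln (real n) powr (2 * \<beta> / \<gamma>))" unfolding Lp_def .
    qed
    have "\<forall>\<^sub>F n in sequentially. False"
      using eventually_conj[OF ev1 ev2] by (rule eventually_mono) (simp add: not_less[symmetric])
    then show False by simp
  qed
  show ?thesis using parta partb des by blast
qed


end
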